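(* Let $t\in(0,1]$ and define $\varphi_t\colon\mathbb Z\times\mathbb Z\to\mathbb C$ by $\varphi_t(i,j)=1/[(i-j)/2]_t$ for $i\ne j$ and $\varphi_t(i,i)=0$. Then for all $\mathbb Z$-graded Hilbert spaces $H=\bigoplus_{i\in\mathbb Z}H_i$, $K=\bigoplus_{i\in\mathbb Z}K_i$, the map $\mathbb M(\varphi_t)\colon B(H,K)\to B(H,K)$ sending an operator with block matrix $(T_{ij})_{i,j}$ to the operator with block matrix $(\varphi_t(i,j)T_{ij})_{i,j}$ is well defined and completely bounded with $$\|\mathbb M(\varphi_t)\|_{\mathrm{cb}}\le\frac{\pi\,(t^{1/2}+t^{-1/2})}{\sqrt3}.$$
   Context: For $s\in(0,1]$ and $r\in\mathbb R$ the $q$-number is $[r]_s=(s^r-s^{-r})/(s-s^{-1})$ if $s<1$ and $[r]_1=r$. An operator $T\in B(H,K)$ between $\mathbb Z$-graded Hilbert spaces has block matrix entries $T_{ij}\colon H_j\to K_i$. *)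

theory Defs
  imports Complex_Main
begin

definition qnum :: "real \<Rightarrow> real \<Rightarrow> real" where
  "qnum s r = (if s < 1 then (s powr r - s powr (-r)) / (s - 1 / s) else r)"

definition phi :: "real \<Rightarrow> int \<Rightarrow> int \<Rightarrow> complex" where
  "phi t i j = (if i = j then 0 else complex_of_real (1 / qnum t (real_of_int (i - j) / 2)))"

(* Concrete model: a Hilbert space is l^2(X) for an index set X (orthonormal basis);
   a Z-grading is a function g : X -> int, H_i = l^2(g^-1 i).
   An operator T : l^2(X) -> l^2(Y) is identified with its matrix a y x = <e_y, T e_x>.
   The operator norm of a matrix is the supremum of |<v, a u>| over finitely supported
   vectors u, v of norm <= 1; a matrix is a bounded operator iff this set is bounded. *)
definition mat_forms :: "'x set \<Rightarrow> 'y set \<Rightarrow> ('y \<Rightarrow> 'x \<Rightarrow> complex) \<Rightarrow> real set" where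
  "mat_forms X Y a = {cmod (\<Sum>y\<in>G. \<Sum>x\<in>F. cnj (v y) * a y x * u x) | F G u v.
      finite F \<and> F \<subseteq> X \<and> finite G \<and> G \<subseteq> Y \<and>
      (\<Sum>x\<in>F. (cmod (u x))\<^sup>2) \<le> 1 \<and> (\<Sum>y\<in>G. (cmod (v y))\<^sup>2) \<le> 1}"

definition bounded_mat :: "'x set \<Rightarrow> 'y set \<Rightarrow> ('y \<Rightarrow> 'x \<Rightarrow> complex) \<Rightarrow> bool" where
  "bounded_mat X Y a \<longleftrightarrow> bdd_above (mat_forms X Y a)"

definition mat_norm :: "'x set \<Rightarrow> 'y set \<Rightarrow> ('y \<Rightarrow> 'x \<Rightarrow> complex) \<Rightarrow> real" where
  "mat_norm X Y a = Sup (mat_forms X Y a)"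

(* Schur multiplier M(phi): block (i,j) = entries with gK y = i, gH x = j gets multiplied by phi i j *)
definition schur :: "(int \<Rightarrow> int \<Rightarrow> complex) \<Rightarrow> ('y \<Rightarrow> int) \<Rightarrow> ('x \<Rightarrow> int)
    \<Rightarrow> ('y \<Rightarrow> 'x \<Rightarrow> complex) \<Rightarrow> 'y \<Rightarrow> 'x \<Rightarrow> complex" where
  "schur \<phi> gK gH a = (\<lambda>y x. \<phi> (gK y) (gH x) * a y x)"

(* Amplification: M_n(B(H,K)) = B(H^n,K^n) with H^n = l^2(X x {..<n}), graded by gH o fst;
   id_n (x) M(phi) applies M(phi) to each block, i.e. is the Schur multiplier for the amplified grading.
   cb_set collects the norms ||(id_n (x) M(phi))(A)|| for ||A|| <= 1, n >= 1. *)
definition cb_set :: "(int \<Rightarrow> int \<Rightarrow> complex) \<Rightarrow> 'x set \<Rightarrow> 'y set \<Rightarrow> ('x \<Rightarrow> int) \<Rightarrow> ('y \<Rightarrow> int)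
    \<Rightarrow> real set" where
  "cb_set \<phi> X Y gH gK = {mat_norm (X \<times> {..<n}) (Y \<times> {..<n}) (schur \<phi> (gK \<circ> fst) (gH \<circ> fst) a) | (n::nat) a.
      n \<ge> 1 \<and> bounded_mat (X \<times> {..<n}) (Y \<times> {..<n}) a \<and> mat_norm (X \<times> {..<n}) (Y \<times> {..<n}) a \<le> 1}"

definition cb_bounded :: "(int \<Rightarrow> int \<Rightarrow> complex) \<Rightarrow> 'x set \<Rightarrow> 'y set \<Rightarrow> ('x \<Rightarrow> int) \<Rightarrow> ('y \<Rightarrow> int) \<Rightarrow> bool" where
  "cb_bounded \<phi> X Y gH gK \<longleftrightarrow> bdd_above (cb_set \<phi> X Y gH gK)"

definition cb_norm :: "(int \<Rightarrow> int \<Rightarrow> complex) \<Rightarrow> 'x set \<Rightarrow> 'y set \<Rightarrow> ('x \<Rightarrow> int) \<Rightarrow> ('y \<Rightarrow> int) \<Rightarrow> real" where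
  "cb_norm \<phi> X Y gH gK = Sup (cb_set \<phi> X Y gH gK)"

end

theory Submission
  imports Defs "HOL-Analysis.Analysis"
begin


lemma sinh_like:
  fixes w :: real assumes "1 \<le> w"
  shows "real n * (w - 1/w) \<le> w^n - 1/w^n"
proof (induction n)
  case 0 then show ?case by simp
next
  case (Suc n)
  have w0: "w > 0" using assms by simp
  define W where "W = w^n"
  have a: "W \<ge> 1" using assms by (simp add: W_def)
  have eq: "w*W - 1/(w*W) - (W - 1/W) - (w - 1/w) = (w-1)*(W-1)*(w*W-1)/(w*W)"
    using w0 a by (simp add: field_simps)
  have "(w-1)*(W-1)*(w*W-1)/(w*W) \<ge> 0"
    using assms a by (intro divide_nonneg_nonneg mult_nonneg_nonneg) (use mult_mono[of 1 w 1 W] in auto)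
  then have "w - 1/w \<le> w^(Suc n) - 1/w^(Suc n) - (w^n - 1/w^n)"
    using eq by (simp add: W_def)
  then show ?case using Suc.IH by (simp add: algebra_simps)
qed


lemma qnum_bound:
  assumes t: "0 < t" "t \<le> 1" and k: "k \<noteq> 0"
  shows "(real_of_int k)\<^sup>2 \<le> (sqrt t + 1 / sqrt t)\<^sup>2 * (qnum t (real_of_int k / 2))\<^sup>2"
proof (cases "t = 1")
  case True
  then show ?thesis by (simp add: qnum_def power_divide)
next
  case False
  then have tl: "t < 1" using t by simp
  define s where "s = sqrt t"
  have s: "0 < s" "s < 1" using t tl by (auto simp: s_def)
  define w where "w = 1 / s"
  have w: "1 < w" using s by (simp add: w_def)
  have tps: "t powr (x/2) = s powr x" for x
    using t by (simp add: s_def powr_half_sqrt[symmetric] powr_powr)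
  obtain n :: nat where n: "k = int n \<or> k = - int n" by (metis int_cases2)
  have A: "(qnum t (real_of_int k / 2))\<^sup>2 = ((w^n - 1/w^n) / (w^2 - 1/w^2))\<^sup>2"
  proof -
    have tt: "t - 1/t = 1/w^2 - w^2" using t by (simp add: s_def w_def power_one_over)
    have p1: "s powr (real n) = 1 / w^n" and p2: "s powr (- real n) = w^n"
      using s by (simp_all add: w_def powr_realpow powr_minus power_one_over inverse_eq_divide)
    have q: "qnum t (real_of_int k / 2) = (s powr (real_of_int k) - s powr (- real_of_int k)) / (1/w^2 - w^2)"
      using tl tps[of "real_of_int k"] tps[of "- real_of_int k"] by (simp add: qnum_def tt)
    have "(1/w^2 - w^2)^2 = (w^2 - 1/w^2)^2" by (simp add: power2_commute)
    moreover have "(s powr (real_of_int k) - s powr (- real_of_int k))^2 = (w^n - 1/w^n)^2"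
      using n p1 p2 by (auto simp: power2_commute)
    ultimately show ?thesis unfolding q by (simp add: power_divide)
  qed
  have B: "(sqrt t + 1 / sqrt t) = w + 1/w" using s by (simp add: w_def s_def)
  have "real n * (w - 1/w) \<le> w^n - 1/w^n" using w sinh_like by simp
  moreover have "w - 1/w > 0" using w less_1_mult[of w w] by (simp add: field_simps)
  ultimately have "(real n)^2 * (w - 1/w)^2 \<le> (w^n - 1/w^n)^2"
    by (metis power_mono power_mult_distrib mult_nonneg_nonneg of_nat_0_le_iff less_imp_le)
  moreover have "w^2 - 1/w^2 = (w - 1/w) * (w + 1/w)" by (simp add: algebra_simps power2_eq_square)
  moreover have "w + 1/w > 0" using w by (simp add: pos_add_strict)
  moreover have "(real_of_int k)^2 = (real n)^2" using n by auto
  ultimately show ?thesis unfolding A B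
  proof -
    assume h1: "(real n)^2 * (w - 1/w)^2 \<le> (w^n - 1/w^n)^2"
       and h2: "w^2 - 1/w^2 = (w - 1/w) * (w + 1/w)" and h3: "w + 1/w > 0"
       and h4: "(real_of_int k)^2 = (real n)^2"
    have a0: "w - 1/w > 0" by fact
    have "(w + 1/w)^2 * (((w^n - 1/w^n) / (w^2 - 1/w^2)))^2 = (w^n - 1/w^n)^2 / (w - 1/w)^2"
      unfolding h2 using a0 h3 by (simp add: power_divide power_mult_distrib)
    moreover have "(real n)^2 \<le> (w^n - 1/w^n)^2 / (w - 1/w)^2"
      using h1 a0 by (simp add: pos_le_divide_eq)
    ultimately show "(real_of_int k)^2 \<le> (w + 1/w)^2 * (((w^n - 1/w^n) / (w^2 - 1/w^2)))^2"
      using h4 by simp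
  qed
qed



lemma basel_partial:
  assumes "finite J" shows "(\<Sum>j\<in>J. 1 / (1 + real j)^2) \<le> pi^2 / 6"
proof -
  have s: "(\<lambda>n. 1 / (1 + real n)^2) sums (pi^2/6)" using inverse_squares_sums by simp
  show ?thesis using sum_le_suminf[OF sums_summable[OF s] assms] sums_unique[OF s] by simp
qed

lemma frac_aux:
  fixes a c b :: real assumes "0 < a" "0 < c" "c \<le> b * a"
  shows "1 / a \<le> b / c"
proof -
  have "c / a \<le> b" using assms by (simp add: pos_divide_le_eq)
  then show ?thesis using assms by (simp add: pos_le_divide_eq)
qed

lemma half_sum:
  fixes n :: int and M :: "int set" and h :: "int \<Rightarrow> nat"
  assumes "finite M" "inj_on h M" "\<And>m. m \<in> M \<Longrightarrow> real (h m) + 1 = \<bar>real_of_int (n - m)\<bar>"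
  shows "(\<Sum>m\<in>M. 1 / (real_of_int (n - m))^2) \<le> pi^2/6"
proof -
  have "(\<Sum>m\<in>M. 1 / (real_of_int (n - m))^2) = (\<Sum>m\<in>M. 1 / (1 + real (h m))^2)"
  proof (intro sum.cong refl)
    fix m assume "m \<in> M"
    then have "(1 + real (h m))^2 = \<bar>real_of_int (n - m)\<bar>^2" using assms(3) by (simp add: add.commute)
    then show "1 / (real_of_int (n - m))^2 = 1 / (1 + real (h m))^2" by simp
  qed
  also have "\<dots> = (\<Sum>j\<in>h ` M. 1 / (1 + real j)^2)"
    using assms(2) by (simp add: sum.reindex)
  also have "\<dots> \<le> pi^2/6" using assms(1) by (intro basel_partial) simp
  finally show ?thesis .
qed

lemma phi_sq_bound:
  assumes t: "0 < t" "t \<le> 1" and M: "finite M"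
  shows "(\<Sum>m\<in>M. (cmod (phi t n m))^2) \<le> (pi * (sqrt t + 1 / sqrt t) / sqrt 3)^2"
proof -
  define B where "B = sqrt t + 1 / sqrt t"
  have each: "(cmod (phi t n m))^2 \<le> B^2 * (if m = n then 0 else 1 / (real_of_int (n - m))^2)" for m
  proof (cases "m = n")
    case True then show ?thesis by (simp add: phi_def)
  next
    case False
    then have k: "n - m \<noteq> 0" by simp
    have qb: "(real_of_int (n-m))^2 \<le> B^2 * (qnum t (real_of_int (n-m) / 2))^2"
      using qnum_bound[OF t k] by (simp add: B_def)
    have pos: "(real_of_int (n-m))^2 > 0" using k by simp
    have q0: "(qnum t (real_of_int (n-m) / 2))^2 > 0"
    proof (rule ccontr)
      assume "\<not> ?thesis"
      then have "(qnum t (real_of_int (n-m) / 2))^2 = 0" by (simp add: not_less)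
      then show False using qb pos by simp
    qed
    have "(cmod (phi t n m))^2 = 1 / (qnum t (real_of_int (n-m) / 2))^2"
      using False by (simp add: phi_def power_divide norm_divide)
    also have "\<dots> \<le> B^2 / (real_of_int (n - m))^2"
      using frac_aux[OF q0 pos qb] .
    finally show ?thesis using False by simp
  qed
  define G where "G = (\<Sum>m\<in>M. (if m = n then 0 else 1 / (real_of_int (n - m))^2))"
  have L1: "(\<Sum>m\<in>M. (cmod (phi t n m))^2) \<le> B^2 * G"
  proof -
    have "(\<Sum>m\<in>M. (cmod (phi t n m))^2) \<le> (\<Sum>m\<in>M. B^2 * (if m = n then 0 else 1 / (real_of_int (n - m))^2))"
      by (intro sum_mono each)
    then show ?thesis by (simp add: G_def sum_distrib_left)
  qed
  have "G = (\<Sum>m\<in>{m\<in>M. m < n} \<union> {m\<in>M. m > n}. (if m = n then 0 else 1 / (real_of_int (n - m))^2))"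
    unfolding G_def using M by (intro sum.mono_neutral_right) auto
  also have "\<dots> = (\<Sum>m\<in>{m\<in>M. m < n}. (if m = n then 0 else 1 / (real_of_int (n - m))^2))
      + (\<Sum>m\<in>{m\<in>M. m > n}. (if m = n then 0 else 1 / (real_of_int (n - m))^2))"
    using M by (intro sum.union_disjoint) auto
  also have "\<dots> = (\<Sum>m\<in>{m\<in>M. m < n}. 1 / (real_of_int (n - m))^2) + (\<Sum>m\<in>{m\<in>M. m > n}. 1 / (real_of_int (n - m))^2)"
    by (intro arg_cong2[where f = "(+)"] sum.cong) auto
  also have "\<dots> \<le> pi^2/6 + pi^2/6"
  proof (rule add_mono)
    show "(\<Sum>m\<in>{m\<in>M. m < n}. 1 / (real_of_int (n - m))^2) \<le> pi^2/6"
      proof (rule half_sum[where h = "\<lambda>m. nat (n - m) - 1"])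
        show "inj_on (\<lambda>m. nat (n - m) - 1) {m\<in>M. m < n}" by (rule inj_onI) auto
        show "finite {m\<in>M. m < n}" using M by simp
        show "real (nat (n - m) - 1) + 1 = \<bar>real_of_int (n - m)\<bar>" if "m \<in> {m\<in>M. m < n}" for m
          using that by (subst of_nat_diff) auto
      qed
    show "(\<Sum>m\<in>{m\<in>M. m > n}. 1 / (real_of_int (n - m))^2) \<le> pi^2/6"
      proof (rule half_sum[where h = "\<lambda>m. nat (m - n) - 1"])
        show "inj_on (\<lambda>m. nat (m - n) - 1) {m\<in>M. m > n}" by (rule inj_onI) auto
        show "finite {m\<in>M. m > n}" using M by simp
        show "real (nat (m - n) - 1) + 1 = \<bar>real_of_int (n - m)\<bar>" if "m \<in> {m\<in>M. m > n}" for m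
          using that by (subst of_nat_diff) auto
      qed
  qed
  finally have G: "G \<le> pi^2/6 + pi^2/6" .
  have "B^2 * G \<le> B^2 * (pi^2/6 + pi^2/6)" using G by (intro mult_left_mono) auto
  also have "B^2 * (pi^2/6 + pi^2/6) = (pi * B / sqrt 3)^2" by (simp add: power_divide power_mult_distrib)
  finally have "B^2 * G \<le> (pi * B / sqrt 3)^2" .
  with L1 have "(\<Sum>m\<in>M. (cmod (phi t n m))^2) \<le> (pi * B / sqrt 3)^2" by (rule order_trans)
  then show ?thesis unfolding B_def .
qed



lemma zero_in_forms: "0 \<in> mat_forms X Y a"
  unfolding mat_forms_def
  by (rule CollectI, rule exI[of _ "{}"], rule exI[of _ "{}"]) auto

lemma mat_norm_nonneg: "bounded_mat X Y a \<Longrightarrow> 0 \<le> mat_norm X Y a"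
  unfolding bounded_mat_def mat_norm_def using zero_in_forms by (rule cSup_upper2) auto

lemma form_in: 
  assumes "bounded_mat X Y a" "finite F" "F \<subseteq> X" "finite G" "G \<subseteq> Y"
    "(\<Sum>x\<in>F. (cmod (u x))\<^sup>2) \<le> 1" "(\<Sum>y\<in>G. (cmod (v y))\<^sup>2) \<le> 1"
  shows "cmod (\<Sum>y\<in>G. \<Sum>x\<in>F. cnj (v y) * a y x * u x) \<le> mat_norm X Y a"
proof -
  have "cmod (\<Sum>y\<in>G. \<Sum>x\<in>F. cnj (v y) * a y x * u x) \<in> mat_forms X Y a"
    unfolding mat_forms_def using assms by blast
  then show ?thesis using assms(1) unfolding bounded_mat_def mat_norm_def by (rule cSup_upper)
qed

lemma form_le:
  assumes a: "bounded_mat X Y a" and F: "finite F" "F \<subseteq> X" and G: "finite G" "G \<subseteq> Y"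
  shows "cmod (\<Sum>y\<in>G. \<Sum>x\<in>F. cnj (v y) * a y x * u x)
    \<le> mat_norm X Y a * sqrt (\<Sum>x\<in>F. (cmod (u x))\<^sup>2) * sqrt (\<Sum>y\<in>G. (cmod (v y))\<^sup>2)"
proof -
  define p where "p = sqrt (\<Sum>x\<in>F. (cmod (u x))\<^sup>2)"
  define q where "q = sqrt (\<Sum>y\<in>G. (cmod (v y))\<^sup>2)"
  have N: "0 \<le> mat_norm X Y a" using a by (rule mat_norm_nonneg)
  have p0: "p \<ge> 0" "q \<ge> 0" unfolding p_def q_def by (auto intro: sum_nonneg)
  show ?thesis
  proof (cases "p = 0 \<or> q = 0")
    case True
    then have "(\<forall>x\<in>F. u x = 0) \<or> (\<forall>y\<in>G. v y = 0)"
      unfolding p_def q_def using F G by (simp add: sum_nonneg_eq_0_iff)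
    then have "(\<Sum>y\<in>G. \<Sum>x\<in>F. cnj (v y) * a y x * u x) = 0" by auto
    then show ?thesis using N p0 unfolding p_def[symmetric] q_def[symmetric] by simp
  next
    case False
    then have pp: "p > 0" "q > 0" using p0 by auto
    define u' where "u' x = u x / complex_of_real p" for x
    define v' where "v' y = v y / complex_of_real q" for y
    have "(\<Sum>x\<in>F. (cmod (u' x))\<^sup>2) = (\<Sum>x\<in>F. (cmod (u x))\<^sup>2) / p^2"
      unfolding u'_def using pp by (simp add: norm_divide power_divide sum_divide_distrib)
    also have "\<dots> = 1" unfolding p_def using pp p_def
      by (metis div_self less_numeral_extra(3) real_sqrt_ge_0_iff real_sqrt_pow2_iff zero_less_power2 p0(1))
    finally have u1: "(\<Sum>x\<in>F. (cmod (u' x))\<^sup>2) \<le> 1" by simp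
    have "(\<Sum>y\<in>G. (cmod (v' y))\<^sup>2) = (\<Sum>y\<in>G. (cmod (v y))\<^sup>2) / q^2"
      unfolding v'_def using pp by (simp add: norm_divide power_divide sum_divide_distrib)
    also have "\<dots> = 1" unfolding q_def using pp q_def
      by (metis div_self less_numeral_extra(3) real_sqrt_ge_0_iff real_sqrt_pow2_iff zero_less_power2 p0(2))
    finally have v1: "(\<Sum>y\<in>G. (cmod (v' y))\<^sup>2) \<le> 1" by simp
    have eq: "(\<Sum>y\<in>G. \<Sum>x\<in>F. cnj (v' y) * a y x * u' x)
        = (\<Sum>y\<in>G. \<Sum>x\<in>F. cnj (v y) * a y x * u x) / complex_of_real (p * q)"
      unfolding u'_def v'_def sum_divide_distrib using pp
      by (intro sum.cong refl) (simp add: field_simps)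
    have "cmod (\<Sum>y\<in>G. \<Sum>x\<in>F. cnj (v' y) * a y x * u' x) \<le> mat_norm X Y a"
      by (rule form_in[OF a F G u1 v1])
    then have "cmod (\<Sum>y\<in>G. \<Sum>x\<in>F. cnj (v y) * a y x * u x) / (p * q) \<le> mat_norm X Y a"
      unfolding eq using pp by (simp add: norm_divide norm_mult)
    then show ?thesis using pp unfolding p_def[symmetric] q_def[symmetric]
      by (simp add: pos_divide_le_eq mult.assoc)
  qed
qed



lemma key:
  fixes \<phi> :: "int \<Rightarrow> int \<Rightarrow> complex" and gK :: "'y \<Rightarrow> int" and gH :: "'x \<Rightarrow> int"
  assumes a: "bounded_mat X Y a" and C: "0 \<le> C"
    and phib: "\<And>n M. finite M \<Longrightarrow> (\<Sum>m\<in>M. (cmod (\<phi> n m))\<^sup>2) \<le> C\<^sup>2"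
    and F: "finite F" "F \<subseteq> X" and G: "finite G" "G \<subseteq> Y"
    and u1: "(\<Sum>x\<in>F. (cmod (u x))\<^sup>2) \<le> 1" and v1: "(\<Sum>y\<in>G. (cmod (v y))\<^sup>2) \<le> 1"
  shows "cmod (\<Sum>y\<in>G. \<Sum>x\<in>F. cnj (v y) * schur \<phi> gK gH a y x * u x) \<le> C * mat_norm X Y a"
proof -
  define M where "M = gH ` F"
  define Fm where "Fm m = {x\<in>F. gH x = m}" for m
  define vm where "vm m y = cnj (\<phi> (gK y) m) * v y" for m y
  define p where "p m = sqrt (\<Sum>x\<in>Fm m. (cmod (u x))\<^sup>2)" for m
  define q where "q m = sqrt (\<Sum>y\<in>G. (cmod (vm m y))\<^sup>2)" for m
  define N where "N = mat_norm X Y a"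
  have N0: "0 \<le> N" unfolding N_def using a by (rule mat_norm_nonneg)
  have fM: "finite M" using F by (simp add: M_def)
  have fFm: "finite (Fm m)" "Fm m \<subseteq> X" for m using F by (auto simp: Fm_def)
  have S1: "(\<Sum>y\<in>G. \<Sum>x\<in>F. cnj (v y) * schur \<phi> gK gH a y x * u x)
      = (\<Sum>m\<in>M. \<Sum>y\<in>G. \<Sum>x\<in>Fm m. cnj (vm m y) * a y x * u x)"
  proof -
    have "(\<Sum>y\<in>G. \<Sum>x\<in>F. cnj (v y) * schur \<phi> gK gH a y x * u x)
        = (\<Sum>y\<in>G. \<Sum>m\<in>M. \<Sum>x\<in>Fm m. cnj (vm m y) * a y x * u x)"
    proof (rule sum.cong[OF refl])
      fix y
      have "(\<Sum>m\<in>M. \<Sum>x\<in>Fm m. cnj (v y) * schur \<phi> gK gH a y x * u x)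
          = (\<Sum>x\<in>F. cnj (v y) * schur \<phi> gK gH a y x * u x)"
        unfolding Fm_def M_def using F by (intro sum.group) auto
      also have "(\<Sum>m\<in>M. \<Sum>x\<in>Fm m. cnj (v y) * schur \<phi> gK gH a y x * u x)
          = (\<Sum>m\<in>M. \<Sum>x\<in>Fm m. cnj (vm m y) * a y x * u x)"
        by (intro sum.cong refl) (auto simp: Fm_def vm_def schur_def)
      finally show "(\<Sum>x\<in>F. cnj (v y) * schur \<phi> gK gH a y x * u x)
          = (\<Sum>m\<in>M. \<Sum>x\<in>Fm m. cnj (vm m y) * a y x * u x)" by simp
    qed
    also have "\<dots> = (\<Sum>m\<in>M. \<Sum>y\<in>G. \<Sum>x\<in>Fm m. cnj (vm m y) * a y x * u x)"
      by (rule sum.swap)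
    finally show ?thesis .
  qed
  have S2: "cmod (\<Sum>m\<in>M. \<Sum>y\<in>G. \<Sum>x\<in>Fm m. cnj (vm m y) * a y x * u x) \<le> (\<Sum>m\<in>M. N * p m * q m)"
  proof -
    have "cmod (\<Sum>m\<in>M. \<Sum>y\<in>G. \<Sum>x\<in>Fm m. cnj (vm m y) * a y x * u x)
        \<le> (\<Sum>m\<in>M. cmod (\<Sum>y\<in>G. \<Sum>x\<in>Fm m. cnj (vm m y) * a y x * u x))"
      by (rule norm_sum)
    also have "\<dots> \<le> (\<Sum>m\<in>M. N * p m * q m)"
      unfolding N_def p_def q_def by (intro sum_mono form_le[OF a fFm G])
    finally show ?thesis .
  qed
  have P: "(\<Sum>m\<in>M. (p m)\<^sup>2) \<le> 1"
  proof -
    have "(\<Sum>m\<in>M. (p m)\<^sup>2) = (\<Sum>m\<in>M. \<Sum>x\<in>Fm m. (cmod (u x))\<^sup>2)"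
      unfolding p_def by (intro sum.cong refl real_sqrt_pow2 sum_nonneg) auto
    also have "\<dots> = (\<Sum>x\<in>F. (cmod (u x))\<^sup>2)"
      unfolding Fm_def M_def using F by (intro sum.group) auto
    finally show ?thesis using u1 by simp
  qed
  have Q: "(\<Sum>m\<in>M. (q m)\<^sup>2) \<le> C\<^sup>2"
  proof -
    have "(\<Sum>m\<in>M. (q m)\<^sup>2) = (\<Sum>m\<in>M. \<Sum>y\<in>G. (cmod (vm m y))\<^sup>2)"
      unfolding q_def by (intro sum.cong refl real_sqrt_pow2 sum_nonneg) auto
    also have "\<dots> = (\<Sum>y\<in>G. (cmod (v y))\<^sup>2 * (\<Sum>m\<in>M. (cmod (\<phi> (gK y) m))\<^sup>2))"
      unfolding vm_def by (subst sum.swap) (simp add: sum_distrib_left norm_mult power_mult_distrib mult.commute)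
    also have "\<dots> \<le> (\<Sum>y\<in>G. (cmod (v y))\<^sup>2 * C\<^sup>2)"
      by (intro sum_mono mult_left_mono phib fM) auto
    also have "\<dots> = (\<Sum>y\<in>G. (cmod (v y))\<^sup>2) * C\<^sup>2" by (simp add: sum_distrib_right)
    also have "\<dots> \<le> 1 * C\<^sup>2" using v1 by (intro mult_right_mono) auto
    finally show ?thesis by simp
  qed
  have S3: "(\<Sum>m\<in>M. p m * q m) \<le> C"
  proof -
    have "(\<Sum>m\<in>M. p m * q m)\<^sup>2 \<le> (\<Sum>m\<in>M. (p m)\<^sup>2) * (\<Sum>m\<in>M. (q m)\<^sup>2)"
      by (rule Cauchy_Schwarz_ineq_sum)
    also have "\<dots> \<le> 1 * C\<^sup>2"
      using P Q by (intro mult_mono) (auto intro: sum_nonneg)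
    finally have "(\<Sum>m\<in>M. p m * q m)\<^sup>2 \<le> C\<^sup>2" by simp
    then show ?thesis using C by (rule power2_le_imp_le)
  qed
  have "(\<Sum>m\<in>M. N * p m * q m) = N * (\<Sum>m\<in>M. p m * q m)"
    by (simp add: sum_distrib_left mult.assoc)
  also have "\<dots> \<le> N * C" using S3 N0 by (rule mult_left_mono)
  finally have "(\<Sum>m\<in>M. N * p m * q m) \<le> N * C" .
  with S2 have "cmod (\<Sum>m\<in>M. \<Sum>y\<in>G. \<Sum>x\<in>Fm m. cnj (vm m y) * a y x * u x) \<le> N * C"
    by (rule order_trans)
  then show ?thesis unfolding S1 N_def by (simp only: mult.commute[of C])
qed



lemma schur_bound:
  fixes \<phi> :: "int \<Rightarrow> int \<Rightarrow> complex" and gK :: "'y \<Rightarrow> int" and gH :: "'x \<Rightarrow> int"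
  assumes a: "bounded_mat X Y a" and C: "0 \<le> C"
    and phib: "\<And>n M. finite M \<Longrightarrow> (\<Sum>m\<in>M. (cmod (\<phi> n m))\<^sup>2) \<le> C\<^sup>2"
  shows "bounded_mat X Y (schur \<phi> gK gH a) \<and> mat_norm X Y (schur \<phi> gK gH a) \<le> C * mat_norm X Y a"
proof -
  have le: "z \<le> C * mat_norm X Y a" if "z \<in> mat_forms X Y (schur \<phi> gK gH a)" for z
    using that unfolding mat_forms_def
    by (auto intro!: key[OF a C phib])
  have "bounded_mat X Y (schur \<phi> gK gH a)"
    unfolding bounded_mat_def bdd_above_def using le by blast
  moreover have "mat_norm X Y (schur \<phi> gK gH a) \<le> C * mat_norm X Y a"
    unfolding mat_norm_def[of X Y "schur \<phi> gK gH a"]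
    using zero_in_forms[of X Y "schur \<phi> gK gH a"] le by (intro cSup_least) blast+
  ultimately show ?thesis by blast
qed

lemma zero_mat: "bounded_mat X Y (\<lambda>_ _. 0) \<and> mat_norm X Y (\<lambda>_ _. 0) \<le> 1"
proof -
  have "mat_forms X Y (\<lambda>_ _. 0) \<subseteq> {0}" unfolding mat_forms_def by auto
  then have "mat_forms X Y (\<lambda>_ _. 0) = {0}" using zero_in_forms by blast
  then show ?thesis unfolding bounded_mat_def mat_norm_def by simp
qed

theorem mainTheorem9:
  fixes t :: real and X :: "'x set" and Y :: "'y set"
    and gH :: "'x \<Rightarrow> int" and gK :: "'y \<Rightarrow> int"
  assumes "0 < t" and "t \<le> 1"
  shows "(\<forall>a. bounded_mat X Y a \<longrightarrow> bounded_mat X Y (schur (phi t) gK gH a))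
    \<and> cb_bounded (phi t) X Y gH gK
    \<and> cb_norm (phi t) X Y gH gK \<le> pi * (sqrt t + 1 / sqrt t) / sqrt 3"
proof -
  define C where "C = pi * (sqrt t + 1 / sqrt t) / sqrt 3"
  have C0: "0 \<le> C" unfolding C_def using assms by simp
  have phib: "\<And>n M. finite M \<Longrightarrow> (\<Sum>m\<in>M. (cmod (phi t n m))\<^sup>2) \<le> C\<^sup>2"
    unfolding C_def using assms by (intro phi_sq_bound) auto
  have part1: "\<forall>a. bounded_mat X Y a \<longrightarrow> bounded_mat X Y (schur (phi t) gK gH a)"
  proof (intro allI impI)
    fix a assume b: "bounded_mat X Y a"
    show "bounded_mat X Y (schur (phi t) gK gH a)" using schur_bound[where \<phi>="phi t", OF b C0 phib] by blast
  qed
  have le: "z \<le> C" if "z \<in> cb_set (phi t) X Y gH gK" for z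
  proof -
    from that obtain n :: nat and a where z: "z = mat_norm (X \<times> {..<n}) (Y \<times> {..<n}) (schur (phi t) (gK \<circ> fst) (gH \<circ> fst) a)"
      and b: "bounded_mat (X \<times> {..<n}) (Y \<times> {..<n}) a" and n1: "mat_norm (X \<times> {..<n}) (Y \<times> {..<n}) a \<le> 1"
      unfolding cb_set_def by blast
    have "z \<le> C * mat_norm (X \<times> {..<n}) (Y \<times> {..<n}) a"
      unfolding z using schur_bound[where \<phi>="phi t", OF b C0 phib] by blast
    also have "\<dots> \<le> C * 1" using n1 C0 by (intro mult_left_mono)
    finally show ?thesis by simp
  qed
  have ne: "cb_set (phi t) X Y gH gK \<noteq> {}"
  proof -
    have "mat_norm (X \<times> {..<1::nat}) (Y \<times> {..<1::nat}) (schur (phi t) (gK \<circ> fst) (gH \<circ> fst) (\<lambda>_ _. 0))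
        \<in> cb_set (phi t) X Y gH gK"
      unfolding cb_set_def
      by (rule CollectI, rule exI[of _ "1::nat"], rule exI[of _ "\<lambda>_ _. 0"], intro conjI)
        (rule refl, simp, rule zero_mat[THEN conjunct1], rule zero_mat[THEN conjunct2])
    then show ?thesis by blast
  qed
  have "cb_bounded (phi t) X Y gH gK" unfolding cb_bounded_def bdd_above_def using le by blast
  moreover have "cb_norm (phi t) X Y gH gK \<le> C" unfolding cb_norm_def using ne le by (rule cSup_least)
  ultimately show ?thesis using part1 unfolding C_def by blast
qed

end
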